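(* There exists an indexed family of languages $\mathscr{L}$ that is identified by some CEGIS engine but by no HCEGIS engine; i.e. $\mathtt{CEGIS}\not\subseteq\mathtt{HCEGIS}$.
   Context: Languages are subsets of $\mathbb{N}$, ordered by the natural order of $\mathbb{N}$; $\overline{L}=\mathbb{N}\setminus L$. An indexed family of languages is a sequence $\mathscr{L}=L_0,L_1,\ldots$ of non-empty recursive languages for which there is a total recursive function $\mathtt{TEMPLATE}$ with $\mathtt{TEMPLATE}(i,n)=1$ if $n\in L_i$ and $0$ otherwise; the program $P_i$ is $n\mapsto\mathtt{TEMPLATE}(i,n)$, $\mathscr{P}=\{P_0,P_1,\ldots\}$, and $L(P_i)=L_i$. A sequence is a map $\sigma:\mathbb{N}\to\mathbb{N}\cup\{\bot\}$; $\sigma[k]$ is its prefix of length $k$, $\sigma(k)$ its $k$-th element, $\sigma_0$ the empty sequence, $\mathtt{SMPL}(\sigma)=\mathrm{range}(\sigma)\setminus\{\bot\}$. A trace for $L$ is a sequence $\tau$ with $\mathtt{SMPL}(\tau)=L$. A verifier $\mathtt{CHECK}_L$ is a (non-deterministic) map from $\mathscr{L}$ to $\mathbb{N}\cup\{\bot\}$ with $\mathtt{CHECK}_L(L_i)=\bot$ iff $L_i\subseteq L$ and otherwise $\mathtt{CHECK}_L(L_i)\in L_i\cap\overline{L}$. A history-bounded verifier $\mathtt{HCHECK}_L$ maps $L_i\in\mathscr{L}$ and a trace prefix $\tau[n]$ to $\mathbb{N}\cup\{\bot\}$: $\mathtt{HCHECK}_L(L_i,\tau[n])=m$ for some $m\in\overline{L}\cap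 L_i$ with $m<\tau(j)$ for some $j\le n$, if such $m$ exists, and $\bot$ otherwise. A CEGIS engine is given by a recursive $F:\mathscr{P}\times\mathbb{N}\times\mathbb{N}\to\mathscr{P}$ (counterexample argument may be $\bot$) and initial program $P_0$: $T(\sigma_0,\sigma_0)=P_0$, $T(\tau[n],\mathtt{cex}[n])=F(T(\tau[n-1],\mathtt{cex}[n-1]),\tau(n),\mathtt{cex}(n))$, where $\tau$ is a trace of the target language $L$ and $\mathtt{cex}(i)=\mathtt{CHECK}_L(L(T(\tau[i-1],\mathtt{cex}[i-1])))$. An HCEGIS engine is defined identically but with $\mathtt{cex}(i)=\mathtt{HCHECK}_L(L(T(\tau[i-1],\mathtt{cex}[i-1])),\tau[i-1])$. $T$ converges to $P_i$ on $(\tau,\mathtt{cex})$ if $T(\tau[n],\mathtt{cex}[n])=P_i$ for all sufficiently large $n$; $T$ identifies $L_i$ if it converges to $P_i$ for every trace $\tau$ of $L_i$ and every corresponding counterexample sequence; $T$ identifies $\mathscr{L}$ if it identifies every member. $\mathtt{CEGIS}$ (resp. $\mathtt{HCEGIS}$) is the class of indexed families identified by some CEGIS (resp. HCEGIS) engine. *)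

theory Defs
  imports Main
begin

text \<open>recfn n f: f, viewed as a function of argument lists of length n, is total recursive.
  Only the values of f on lists of length n are meaningful.\<close>

inductive recfn :: "nat \<Rightarrow> (nat list \<Rightarrow> nat) \<Rightarrow> bool" where
  zero: "recfn n (\<lambda>_. 0)"
| suc: "recfn 1 (\<lambda>xs. Suc (xs ! 0))"
| proj: "i < n \<Longrightarrow> recfn n (\<lambda>xs. xs ! i)"
| comp: "recfn (length gs) f \<Longrightarrow> (\<forall>g\<in>set gs. recfn n g)
         \<Longrightarrow> recfn n (\<lambda>xs. f (map (\<lambda>g. g xs) gs))"
| prec: "recfn n g \<Longrightarrow> recfn (Suc (Suc n)) h
         \<Longrightarrow> recfn (Suc n) (\<lambda>xs. rec_nat (g (tl xs)) (\<lambda>y r. h (y # r # tl xs)) (hd xs))"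
| mu: "recfn (Suc n) g \<Longrightarrow> (\<forall>xs. length xs = n \<longrightarrow> (\<exists>y. g (y # xs) = 0))
         \<Longrightarrow> recfn n (\<lambda>xs. LEAST y. g (y # xs) = 0)"

text \<open>A language is a set of naturals; bottom is None.  Program P_i is represented by its index i,
  with L(P_i) = Lf i.\<close>

definition indexed_family :: "(nat \<Rightarrow> nat set) \<Rightarrow> bool" where
  "indexed_family Lf \<longleftrightarrow> (\<forall>i. Lf i \<noteq> {}) \<and>
     (\<exists>template. recfn 2 template \<and>
        (\<forall>i n. template [i, n] = (if n \<in> Lf i then 1 else 0)))"

definition SMPL :: "(nat \<Rightarrow> nat option) \<Rightarrow> nat set" where
  "SMPL \<sigma> = {k. \<exists>n. \<sigma> n = Some k}"

definition trace_for :: "(nat \<Rightarrow> nat option) \<Rightarrow> nat set \<Rightarrow> bool" where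
  "trace_for \<tau> L \<longleftrightarrow> SMPL \<tau> = L"

definition enc_opt :: "nat option \<Rightarrow> nat" where
  "enc_opt c = (case c of None \<Rightarrow> 0 | Some k \<Rightarrow> Suc k)"

definition recursive_engine :: "(nat \<Rightarrow> nat option \<Rightarrow> nat option \<Rightarrow> nat) \<Rightarrow> bool" where
  "recursive_engine F \<longleftrightarrow>
     (\<exists>f. recfn 3 f \<and> (\<forall>p a c. f [p, enc_opt a, enc_opt c] = F p a c))"

text \<open>Hypothesis after n steps: run 0 = initial program; step n feeds tau n and cex n,
  where cex n is the verifier's answer on the current hypothesis run n.\<close>
fun run :: "(nat \<Rightarrow> nat option \<Rightarrow> nat option \<Rightarrow> nat) \<Rightarrow> nat \<Rightarrow> (nat \<Rightarrow> nat option)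
             \<Rightarrow> (nat \<Rightarrow> nat option) \<Rightarrow> nat \<Rightarrow> nat" where
  "run F p0 \<tau> cex 0 = p0"
| "run F p0 \<tau> cex (Suc n) = F (run F p0 \<tau> cex n) (\<tau> n) (cex n)"

definition check_ok :: "nat set \<Rightarrow> nat set \<Rightarrow> nat option \<Rightarrow> bool" where
  "check_ok L H c \<longleftrightarrow> (case c of None \<Rightarrow> H \<subseteq> L | Some m \<Rightarrow> m \<in> H \<inter> - L)"

definition hcheck_ok :: "nat set \<Rightarrow> nat set \<Rightarrow> (nat \<Rightarrow> nat option) \<Rightarrow> nat \<Rightarrow> nat option \<Rightarrow> bool" where
  "hcheck_ok L H \<tau> n c \<longleftrightarrow>
     (let B = {m. m \<in> H \<inter> - L \<and> (\<exists>j<n. \<exists>k. \<tau> j = Some k \<and> m < k)}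
      in case c of None \<Rightarrow> B = {} | Some m \<Rightarrow> m \<in> B)"

definition converges_to :: "(nat \<Rightarrow> nat) \<Rightarrow> nat \<Rightarrow> bool" where
  "converges_to s i \<longleftrightarrow> (\<exists>N. \<forall>n\<ge>N. s n = i)"

definition cegis_identifies ::
  "(nat \<Rightarrow> nat set) \<Rightarrow> (nat \<Rightarrow> nat option \<Rightarrow> nat option \<Rightarrow> nat) \<Rightarrow> nat \<Rightarrow> bool" where
  "cegis_identifies Lf F p0 \<longleftrightarrow>
     (\<forall>i \<tau> cex. trace_for \<tau> (Lf i) \<longrightarrow>
        (\<forall>n. check_ok (Lf i) (Lf (run F p0 \<tau> cex n)) (cex n)) \<longrightarrow>
        converges_to (run F p0 \<tau> cex) i)"

definition hcegis_identifies ::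
  "(nat \<Rightarrow> nat set) \<Rightarrow> (nat \<Rightarrow> nat option \<Rightarrow> nat option \<Rightarrow> nat) \<Rightarrow> nat \<Rightarrow> bool" where
  "hcegis_identifies Lf F p0 \<longleftrightarrow>
     (\<forall>i \<tau> cex. trace_for \<tau> (Lf i) \<longrightarrow>
        (\<forall>n. hcheck_ok (Lf i) (Lf (run F p0 \<tau> cex n)) \<tau> n (cex n)) \<longrightarrow>
        converges_to (run F p0 \<tau> cex) i)"

definition CEGIS :: "(nat \<Rightarrow> nat set) set" where
  "CEGIS = {Lf. indexed_family Lf \<and> (\<exists>F p0. recursive_engine F \<and> cegis_identifies Lf F p0)}"

definition HCEGIS :: "(nat \<Rightarrow> nat set) set" where
  "HCEGIS = {Lf. indexed_family Lf \<and> (\<exists>F p0. recursive_engine F \<and> hcegis_identifies Lf F p0)}"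

end

theory Submission
  imports Defs
begin

lemma comp1: "recfn 1 f \<Longrightarrow> recfn n g \<Longrightarrow> recfn n (\<lambda>xs. f [g xs])"
  using recfn.comp[of "[g]" f n] by simp

lemma comp2: "recfn 2 f \<Longrightarrow> recfn n g1 \<Longrightarrow> recfn n g2 \<Longrightarrow> recfn n (\<lambda>xs. f [g1 xs, g2 xs])"
  using recfn.comp[of "[g1,g2]" f n] by (simp add: numeral_2_eq_2)

lemma ex_one: "\<exists>f. recfn n f \<and> (\<forall>xs. f xs = 1)"
proof -
  have "recfn n (\<lambda>xs. (\<lambda>xs. Suc (xs ! 0)) [(\<lambda>_. 0) xs])"
    by (rule comp1[OF recfn.suc recfn.zero])
  then show ?thesis by (intro exI[of _ "\<lambda>xs. 1"]) simp
qed

lemma ex_pred: "\<exists>f. recfn 1 f \<and> (\<forall>x. f [x] = x - 1)"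
proof -
  have r: "recfn (Suc 0) (\<lambda>xs. rec_nat ((\<lambda>_. 0) (tl xs)) (\<lambda>y r. (\<lambda>xs. xs ! 0) (y # r # tl xs)) (hd xs))"
    by (rule recfn.prec[OF recfn.zero recfn.proj]) simp
  show ?thesis
    apply (rule exI, rule conjI)
     apply (rule r[simplified One_nat_def[symmetric]])
    apply (intro allI, case_tac x, auto)
    done
qed

lemma ex_sub: "\<exists>f. recfn 2 f \<and> (\<forall>x y. f [x,y] = x - y)"
proof -
  obtain P where P: "recfn 1 P" "\<forall>x. P [x] = x - 1" using ex_pred by blast
  have h: "recfn 3 (\<lambda>xs. P [xs ! 1])" by (rule comp1[OF P(1) recfn.proj]) simp
  have r: "recfn (Suc 1) (\<lambda>xs. rec_nat ((\<lambda>xs. xs ! 0) (tl xs)) (\<lambda>y r. (\<lambda>xs. P [xs ! 1]) (y # r # tl xs)) (hd xs))"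
    by (rule recfn.prec[OF recfn.proj]) (use h in \<open>simp_all add: numeral_3_eq_3\<close>)
  define D where "D = (\<lambda>xs. rec_nat ((\<lambda>xs. xs ! 0) (tl xs)) (\<lambda>y r. (\<lambda>xs. P [xs ! 1]) (y # r # tl xs)) (hd xs))"
  have D2: "recfn 2 D" using r by (simp add: D_def numeral_2_eq_2)
  have Dv: "D [y, x] = x - y" for x y
    by (induction y) (auto simp: D_def P(2))
  have "recfn 2 (\<lambda>xs. D [xs ! 1, xs ! 0])"
    by (rule comp2[OF D2 recfn.proj recfn.proj]) auto
  then show ?thesis by (intro exI[of _ "\<lambda>xs. D [xs ! 1, xs ! 0]"]) (simp add: Dv)
qed

definition Lf0 :: "nat \<Rightarrow> nat set" where
  "Lf0 i = (case i of 0 \<Rightarrow> UNIV | Suc k \<Rightarrow> {..k})"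

definition F0 :: "nat \<Rightarrow> nat option \<Rightarrow> nat option \<Rightarrow> nat" where
  "F0 p a c = (case c of None \<Rightarrow> p | Some m \<Rightarrow> if p = 0 then m else p - 1)"

lemma indexed: "indexed_family Lf0"
proof -
  obtain S where S: "recfn 2 S" "\<forall>x y. S [x,y] = x - y" using ex_sub by blast
  obtain O1 where O1: "recfn 1 O1" "\<forall>xs. O1 xs = 1" using ex_one by blast
  obtain O3 where O3: "recfn 3 O3" "\<forall>xs. O3 xs = 1" using ex_one by blast
  have in2: "recfn 3 (\<lambda>xs. S [xs ! 2, xs ! 0])"
    by (rule comp2[OF S(1) recfn.proj recfn.proj]) auto
  have h: "recfn 3 (\<lambda>xs. S [O3 xs, S [xs ! 2, xs ! 0]])"
    by (rule comp2[OF S(1) O3(1) in2])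
  have r: "recfn (Suc 1) (\<lambda>xs. rec_nat (O1 (tl xs)) (\<lambda>y r. (\<lambda>xs. S [O3 xs, S [xs ! 2, xs ! 0]]) (y # r # tl xs)) (hd xs))"
    by (rule recfn.prec[OF O1(1)]) (use h in \<open>simp add: numeral_3_eq_3\<close>)
  show ?thesis
    unfolding indexed_family_def
  proof (intro conjI allI exI)
    fix i show "Lf0 i \<noteq> {}" by (cases i) (auto simp: Lf0_def)
  next
    show "recfn 2 (\<lambda>xs. rec_nat (O1 (tl xs)) (\<lambda>y r. (\<lambda>xs. S [O3 xs, S [xs ! 2, xs ! 0]]) (y # r # tl xs)) (hd xs))"
      using r by (simp add: numeral_2_eq_2)
  next
    fix i n
    show "(\<lambda>xs. rec_nat (O1 (tl xs)) (\<lambda>y r. (\<lambda>xs. S [O3 xs, S [xs ! 2, xs ! 0]]) (y # r # tl xs)) (hd xs)) [i, n]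
          = (if n \<in> Lf0 i then 1 else 0)"
      by (cases i) (auto simp: Lf0_def O1(2) O3(2) S(2))
  qed
qed

lemma engine: "recursive_engine F0"
proof -
  obtain S where S: "recfn 2 S" "\<forall>x y. S [x,y] = x - y" using ex_sub by blast
  obtain P where P: "recfn 1 P" "\<forall>x. P [x] = x - 1" using ex_pred by blast
  obtain O1 where O1: "recfn 1 O1" "\<forall>xs. O1 xs = 1" using ex_one by blast
  define Sg where "Sg = (\<lambda>xs. S [O1 xs, S [O1 xs, xs ! 0]])"
  have in1: "recfn 1 (\<lambda>xs. S [O1 xs, xs ! 0])"
    by (rule comp2[OF S(1) O1(1) recfn.proj]) auto
  have Sg1: "recfn 1 Sg" unfolding Sg_def by (rule comp2[OF S(1) O1(1) in1])
  have Sgv: "Sg [x] = (if x = 0 then 0 else 1)" for x by (simp add: Sg_def S(2) O1(2))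
  have g: "recfn 2 (\<lambda>xs. P [xs ! 1])" by (rule comp1[OF P(1) recfn.proj]) auto
  have a1: "recfn 4 (\<lambda>xs. Suc ([xs ! 0] ! 0))" by (rule comp1[OF recfn.suc recfn.proj]) auto
  have a2: "recfn 4 (\<lambda>xs. Sg [xs ! 3])" by (rule comp1[OF Sg1 recfn.proj]) auto
  have h: "recfn 4 (\<lambda>xs. S [Suc ([xs ! 0] ! 0), Sg [xs ! 3]])" by (rule comp2[OF S(1) a1 a2])
  have r: "recfn (Suc 2) (\<lambda>xs. rec_nat ((\<lambda>xs. P [xs ! 1]) (tl xs)) (\<lambda>y r. (\<lambda>xs. S [Suc ([xs ! 0] ! 0), Sg [xs ! 3]]) (y # r # tl xs)) (hd xs))"
    by (rule recfn.prec[OF g]) (use h in \<open>simp add: numeral_2_eq_2 eval_nat_numeral\<close>)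
  show ?thesis
    unfolding recursive_engine_def
  proof (intro exI conjI allI)
    show "recfn 3 (\<lambda>xs. rec_nat ((\<lambda>xs. P [xs ! 1]) (tl xs)) (\<lambda>y r. (\<lambda>xs. S [Suc ([xs ! 0] ! 0), Sg [xs ! 3]]) (y # r # tl xs)) (hd xs))"
      using r by (simp add: numeral_3_eq_3 numeral_2_eq_2)
  next
    fix p a c
    show "(\<lambda>xs. rec_nat ((\<lambda>xs. P [xs ! 1]) (tl xs)) (\<lambda>y r. (\<lambda>xs. S [Suc ([xs ! 0] ! 0), Sg [xs ! 3]]) (y # r # tl xs)) (hd xs))
          [p, enc_opt a, enc_opt c] = F0 p a c"
      by (cases p; cases c) (auto simp: F0_def enc_opt_def P(2) S(2) Sgv eval_nat_numeral)
  qed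
qed

lemma cegis_id: "cegis_identifies Lf0 F0 0"
  unfolding cegis_identifies_def
proof (intro allI impI)
  fix i \<tau> cex
  assume ck: "\<forall>n. check_ok (Lf0 i) (Lf0 (run F0 0 \<tau> cex n)) (cex n)"
  let ?R = "run F0 0 \<tau> cex"
  show "converges_to ?R i"
  proof (cases i)
    case 0
    have c: "cex n = None" for n using ck[rule_format, of n]
      by (auto simp: check_ok_def Lf0_def 0 split: option.splits)
    have "?R n = 0" for n by (induction n) (auto simp: F0_def c)
    then show ?thesis using 0 by (auto simp: converges_to_def)
  next
    case (Suc k)
    have step: "?R (Suc n) = (if ?R n > Suc k then ?R n - 1 else ?R n)" if ge: "?R n \<ge> Suc k" for n
    proof -
      obtain j where j: "?R n = Suc j" using ge by (cases "?R n") auto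
      have c: "check_ok {..k} {..j} (cex n)" using ck[rule_format, of n] j Suc by (simp add: Lf0_def)
      show ?thesis
      proof (cases "j = k")
        case True
        then have "cex n = None" using c by (auto simp: check_ok_def split: option.splits)
        then show ?thesis using j True by (simp add: F0_def)
      next
        case False
        with ge j have jk: "j > k" by simp
        then have "\<not> {..j} \<subseteq> {..k}" by auto
        then obtain m where "cex n = Some m" using c by (auto simp: check_ok_def split: option.splits)
        then show ?thesis using j jk by (simp add: F0_def)
      qed
    qed
    have R1: "?R 1 \<ge> Suc k"
    proof -
      have c: "check_ok {..k} UNIV (cex 0)" using ck[rule_format, of 0] Suc by (simp add: Lf0_def)
      have nsub: "\<not> (UNIV \<subseteq> {..k})" by auto
      show ?thesis
      proof (cases "cex 0")
        case None then show ?thesis using c nsub by (simp add: check_ok_def)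
      next
        case (Some m) then show ?thesis using c by (auto simp: check_ok_def F0_def)
      qed
    qed
    have main: "?R (Suc n) = max (Suc k) (?R 1 - n)" for n
    proof (induction n)
      case 0 then show ?case using R1 by simp
    next
      case (Suc n)
      have "?R (Suc n) \<ge> Suc k" using Suc.IH by simp
      from step[OF this] Suc.IH show ?case by (auto simp: max_def)
    qed
    show ?thesis unfolding converges_to_def
    proof (intro exI allI impI)
      fix n assume "Suc (?R 1) \<le> n"
      then obtain n' where "n = Suc n'" "n' \<ge> ?R 1" by (cases n) auto
      then show "?R n = i" using main[of n'] Suc by simp
    qed
  qed
qed

lemma run_prefix: "(\<forall>j<n. \<tau> j = \<tau>' j) \<Longrightarrow> run F p \<tau> c n = run F p \<tau>' c n"
  by (induction n) auto

definition pad :: "nat list \<Rightarrow> nat \<Rightarrow> nat \<Rightarrow> nat option" where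
  "pad ys d j = Some (if j < length ys then ys ! j else d)"

lemma SMPL_pad: "SMPL (pad ys d) = insert d (set ys)"
proof
  show "SMPL (pad ys d) \<subseteq> insert d (set ys)"
    by (auto simp: SMPL_def pad_def split: if_splits)
next
  show "insert d (set ys) \<subseteq> SMPL (pad ys d)"
  proof
    fix x assume "x \<in> insert d (set ys)"
    then show "x \<in> SMPL (pad ys d)"
    proof
      assume "x = d" then show ?thesis unfolding SMPL_def pad_def
        by (intro CollectI exI[of _ "length ys"]) simp
    next
      assume "x \<in> set ys"
      then obtain j where "j < length ys" "ys ! j = x" by (auto simp: in_set_conv_nth)
      then show ?thesis unfolding SMPL_def pad_def by (intro CollectI exI[of _ j]) simp
    qed
  qed
qed

lemma hnone:
  assumes "trace_for \<tau> (Lf0 i)" shows "hcheck_ok (Lf0 i) H \<tau> n None"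
proof (cases i)
  case 0 then show ?thesis by (simp add: hcheck_ok_def Lf0_def)
next
  case (Suc k)
  have "\<tau> j = Some x \<Longrightarrow> x \<le> k" for j x
    using assms Suc by (auto simp: trace_for_def SMPL_def Lf0_def)
  then show ?thesis using Suc by (fastforce simp: hcheck_ok_def Lf0_def Let_def)
qed

lemma not_h: "\<not> hcegis_identifies Lf0 F p0"
proof
  assume H: "hcegis_identifies Lf0 F p0"
  define R where "R \<tau> = run F p0 \<tau> (\<lambda>_. None)" for \<tau>
  have conv: "converges_to (R \<tau>) i" if "trace_for \<tau> (Lf0 i)" for \<tau> i
  proof -
    have "\<forall>n. hcheck_ok (Lf0 i) (Lf0 (run F p0 \<tau> (\<lambda>_. None) n)) \<tau> n ((\<lambda>_. None) n)"
      using hnone[OF that] by simp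
    then show ?thesis unfolding R_def
      using H[unfolded hcegis_identifies_def, THEN spec[of _ i], THEN spec[of _ \<tau>], THEN spec[of _ "\<lambda>_. None"]] that
      by simp
  qed
  define Q where "Q xs s xs' \<longleftrightarrow> (\<exists>zs. xs' = xs @ zs) \<and> length xs < length xs' \<and> set xs' = {..s}
      \<and> (\<forall>\<tau>. (\<forall>j<length xs'. \<tau> j = Some (xs' ! j)) \<longrightarrow> R \<tau> (length xs') \<noteq> 0)" for xs s xs'
  have G: "\<exists>xs'. Q xs s xs'" if sub: "set xs \<subseteq> {..s}" for xs s
  proof -
    let ?ys = "xs @ [0..<Suc s]"
    have sy: "set ?ys = {..s}" using sub by auto
    then have trs: "trace_for (pad ?ys s) (Lf0 (Suc s))"
      by (auto simp: trace_for_def SMPL_pad Lf0_def)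
    then obtain N where N: "\<forall>n\<ge>N. R (pad ?ys s) n = Suc s"
      using conv[OF trs] unfolding converges_to_def by blast
    define n where "n = max N (length ?ys)"
    define xs' where "xs' = ?ys @ replicate (n - length ?ys) s"
    have len: "length xs' = n" by (simp add: xs'_def n_def)
    have padeq: "pad xs' s = pad ?ys s"
      by (rule ext) (auto simp: pad_def xs'_def nth_append)
    have "Q xs s xs'"
      unfolding Q_def
    proof (intro conjI allI impI)
      show "\<exists>zs. xs' = xs @ zs" by (simp add: xs'_def)
      show "length xs < length xs'" using len n_def by simp
      have "set xs' = set ?ys \<union> set (replicate (n - length ?ys) s)"
        unfolding xs'_def by (rule set_append)
      then show "set xs' = {..s}" unfolding sy
        by (simp add: set_replicate_conv_if insert_absorb)
      fix \<tau> assume a: "\<forall>j<length xs'. \<tau> j = Some (xs' ! j)"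
      have "R \<tau> (length xs') = R (pad xs' s) (length xs')"
        unfolding R_def by (rule run_prefix) (simp add: pad_def a)
      also have "\<dots> = Suc s" using N padeq len n_def by simp
      finally show "R \<tau> (length xs') \<noteq> 0" by simp
    qed
    then show ?thesis by blast
  qed
  have Qapp: "\<exists>zs. c = a @ zs" "length a < length c" "set c = {..b}"
     "\<And>\<tau>. (\<forall>j<length c. \<tau> j = Some (c ! j)) \<Longrightarrow> R \<tau> (length c) \<noteq> 0"
    if "Q a b c" for a b c using that unfolding Q_def by blast+
  define Gf where "Gf xs s = (SOME xs'. Q xs s xs')" for xs s
  have Gf: "Q xs s (Gf xs s)" if "set xs \<subseteq> {..s}" for xs s
    unfolding Gf_def using G[OF that] by (rule someI_ex)
  define pre where "pre = rec_nat [] (\<lambda>s p. Gf p s)"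
  have pre0: "pre 0 = []" and preS: "pre (Suc s) = Gf (pre s) s" for s by (simp_all add: pre_def)
  have setpre: "set (pre s) = {..<s}" for s
  proof (induction s)
    case 0 then show ?case by (simp add: pre0)
  next
    case (Suc s)
    have "set (pre s) \<subseteq> {..s}" unfolding Suc.IH by auto
    from Qapp(3)[OF Gf[OF this]] show ?case by (simp add: preS lessThan_Suc_atMost)
  qed
  have QS: "Q (pre s) s (pre (Suc s))" for s
    unfolding preS by (rule Gf) (unfold setpre, auto)
  have lenpre: "s \<le> length (pre s)" for s
  proof (induction s)
    case (Suc s) then show ?case using Qapp(2)[OF QS[of s]] by simp
  qed simp
  have prefix: "\<exists>zs. pre t = pre s @ zs" if "s \<le> t" for s t
    using that
  proof (induction t rule: dec_induct)
    case base then show ?case by simp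
  next
    case (step t)
    then obtain zs where "pre t = pre s @ zs" by blast
    moreover obtain ws where "pre (Suc t) = pre t @ ws" using Qapp(1)[OF QS[of t]] by blast
    ultimately show ?case by auto
  qed
  have nth_pre: "pre s ! j = pre t ! j" if "j < length (pre s)" "j < length (pre t)" for s t j
  proof -
    obtain zs where z1: "pre (max s t) = pre s @ zs" using prefix[of s "max s t"] by auto
    obtain ws where z2: "pre (max s t) = pre t @ ws" using prefix[of t "max s t"] by auto
    have "pre (max s t) ! j = pre s ! j" using z1 that by (simp add: nth_append)
    moreover have "pre (max s t) ! j = pre t ! j" using z2 that by (simp add: nth_append)
    ultimately show ?thesis by simp
  qed
  define \<tau> where "\<tau> j = Some (pre (Suc j) ! j)" for j
  have \<tau>pre: "\<tau> j = Some (pre s ! j)" if "j < length (pre s)" for s j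
  proof -
    have "j < length (pre (Suc j))" using lenpre[of "Suc j"] by simp
    then show ?thesis using nth_pre[OF that] by (simp add: \<tau>_def)
  qed
  have tr0: "trace_for \<tau> (Lf0 0)"
  proof -
    have "k \<in> SMPL \<tau>" for k :: nat
    proof -
      have "k \<in> set (pre (Suc k))" using setpre[of "Suc k"] by simp
      then obtain j where j: "j < length (pre (Suc k))" "pre (Suc k) ! j = k"
        by (auto simp: in_set_conv_nth)
      show ?thesis unfolding SMPL_def using \<tau>pre[OF j(1)] j(2) by auto
    qed
    then show ?thesis unfolding trace_for_def Lf0_def by auto
  qed
  then obtain N where N: "\<forall>n\<ge>N. R \<tau> n = 0" using conv[OF tr0] unfolding converges_to_def by blast
  have "R \<tau> (length (pre (Suc N))) \<noteq> 0"
    by (rule Qapp(4)[OF QS[of N]]) (simp add: \<tau>pre)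
  moreover have "N \<le> length (pre (Suc N))" using lenpre[of "Suc N"] by simp
  ultimately show False using N by simp
qed

theorem lemma1:
  shows "\<exists>Lf. Lf \<in> CEGIS \<and> Lf \<notin> HCEGIS"
proof (intro exI conjI)
  show "Lf0 \<in> CEGIS" unfolding CEGIS_def using indexed engine cegis_id by blast
  show "Lf0 \<notin> HCEGIS" unfolding HCEGIS_def using not_h by blast
qed

end
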